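(* Consider $N$ agents. For each agent $k$ let $R_{u,k}$ be an $M\times M$ Hermitian positive definite matrix, $c_k\in(0,\infty)$, $\delta_k,r_k\in(0,1)$, and $\chi_k\triangleq\frac{1-\delta_kr_k}{\delta_k(1-r_k)}$, $\chi_{\min}\triangleq\min_k\chi_k$. Let $\mu>0$ with $\mu\lambda_{\max}(R_{u,k})\le1$ for all $k$, and $\rho_{\max}\triangleq\max_k\lambda_{\max}(I-\mu R_{u,k})$. For each $k$ and time $i$, let $\widetilde{\boldsymbol w}_{k,i-1}$ be a random vector in $\mathbb{C}^M$, let $\bar{\boldsymbol b}_k(i)\triangleq\|(I-\mu R_{u,k})\widetilde{\boldsymbol w}_{k,i-1}\|^2_{R_{u,k}}$, and for each neighbor $\ell$ let $\boldsymbol\theta_{\ell k}(i)$ be a random variable with values in $[\varepsilon,1]$ for some $\varepsilon\in(0,1)$. Agent $k$'s action toward $\ell$ is $\boldsymbol a_{k\ell}(i)=1$ if $\bar{\boldsymbol b}_k(i)\boldsymbol\theta_{\ell k}(i)>c_k\chi_k$ and $\boldsymbol a_{k\ell}(i)=0$ otherwise. Suppose there exist a constant $\eta>0$ and an index $i_0$ such that $\mathbb{E}\|\widetilde{\boldsymbol w}_{k,i}\|^2_{R_{u,k}}\le\eta\mu$ for all $k$ and all $i\ge i_0$. Then for every agent $k$, every neighbor $\ell$ and every $i\ge i_0+1$, $${\rm Prob}\{\boldsymbol a_{k\ell}(i)=1\}\le\min\Big\{\frac{c^o}{c_k},1\Big\},\qquad c^o\triangleq\frac{\eta\mu\rho_{\max}^2}{\chi_{\min}},$$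 where $c^o$ does not depend on $c_k$.
   Context: For a Hermitian positive definite $R$, $\|x\|^2_R\triangleq x^*Rx$. In the paper, $\widetilde{\boldsymbol w}_{k,i-1}=w^o-\boldsymbol w_{k,i-1}$ is agent $k$'s estimation error in a diffusion LMS network, $\mu$ the step-size, $R_{u,k}$ the regressor covariance, $c_k$ the per-transmission communication cost, $\delta_k$ a discount factor, $r_k$ the reputation smoothing factor, $\boldsymbol\theta_{\ell k}(i)$ the reputation score agent $k$ keeps about $\ell$ (floored at $\varepsilon$), and the action rule is the agent's (risk-taking) best response rule; the hypothesis on $\eta$ is the paper's steady-state mean-square bound ("after sufficient iterations"). *)

theory Defs
  imports "HOL-Probability.Probability"
begin

text \<open>Weighted squared norm  x^* R x  (real part; it is real for Hermitian R).\<close>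
definition wnorm2 :: "complex^'m^'m \<Rightarrow> complex^'m \<Rightarrow> real" where
  "wnorm2 R x = Re (\<Sum>i\<in>UNIV. cnj (x $ i) * ((R *v x) $ i))"

definition hermitian_mat :: "complex^'m^'m \<Rightarrow> bool" where
  "hermitian_mat R \<longleftrightarrow> (\<forall>i j. R $ i $ j = cnj (R $ j $ i))"

definition pos_def_mat :: "complex^'m^'m \<Rightarrow> bool" where
  "pos_def_mat R \<longleftrightarrow> hermitian_mat R \<and> (\<forall>x. x \<noteq> 0 \<longrightarrow> wnorm2 R x > 0)"

text \<open>Largest eigenvalue of a Hermitian matrix (its eigenvalues are real).\<close>
definition lambda_max :: "complex^'m^'m \<Rightarrow> real" where
  "lambda_max R = Max {t::real. \<exists>x. x \<noteq> 0 \<and> R *v x = complex_of_real t *s x}"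

definition chi :: "real \<Rightarrow> real \<Rightarrow> real" where
  "chi \<delta> r = (1 - \<delta> * r) / (\<delta> * (1 - r))"

end

theory Submission
  imports Defs
begin

definition sadj :: "('v::euclidean_space \<Rightarrow> 'v) \<Rightarrow> bool" where
  "sadj L \<longleftrightarrow> linear L \<and> (\<forall>x y. inner x (L y) = inner (L x) y)"

definition eigs :: "('v::euclidean_space \<Rightarrow> 'v) \<Rightarrow> real set" where
  "eigs L = {t. \<exists>x. x \<noteq> 0 \<and> L x = t *\<^sub>R x}"

lemma eigs_finite:
  assumes "sadj L" shows "finite (eigs L)"
proof -
  define e where "e t = (SOME x. x \<noteq> 0 \<and> L x = t *\<^sub>R x)" for t
  have e: "e t \<noteq> 0 \<and> L (e t) = t *\<^sub>R e t" if "t \<in> eigs L" for t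
    using that unfolding eigs_def e_def by (metis (mono_tags, lifting) mem_Collect_eq someI_ex)
  have orth: "inner (e s) (e t) = 0" if "s \<in> eigs L" "t \<in> eigs L" "s \<noteq> t" for s t
  proof -
    have "t * inner (e s) (e t) = inner (e s) (L (e t))" using e[OF that(2)] by simp
    also have "\<dots> = inner (L (e s)) (e t)" using assms sadj_def by blast
    also have "\<dots> = s * inner (e s) (e t)" using e[OF that(1)] by simp
    finally show ?thesis using that(3) by auto
  qed
  have inj: "inj_on e (eigs L)"
  proof (rule inj_onI)
    fix s t assume st: "s \<in> eigs L" "t \<in> eigs L" "e s = e t"
    show "s = t"
    proof (rule ccontr)
      assume "s \<noteq> t"
      then have "inner (e s) (e s) = 0" using orth[OF st(1,2)] st(3) by simp
      then show False using e[OF st(1)] by simp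
    qed
  qed
  have "pairwise orthogonal (e ` eigs L)"
    unfolding pairwise_def orthogonal_def using orth by auto
  then have "finite (e ` eigs L)" by (rule pairwise_orthogonal_imp_finite)
  then show ?thesis using finite_imageD inj by blast
qed

lemma psd_cs:
  assumes "sadj P" "\<And>x. inner x (P x) \<ge> 0" "inner z (P z) = 0"
  shows "P z = 0"
proof -
  have lin: "linear P" using assms(1) sadj_def by blast
  define y where "y = P z"
  define a where "a = inner y (P z)"
  define b where "b = inner y (P y)"
  have b0: "b \<ge> 0" using assms(2) b_def by simp
  have sym: "inner z (P y) = a" unfolding a_def using assms(1) sadj_def
    by (metis inner_commute)
  have key: "0 \<le> 2 * s * a + s^2 * b" for s
  proof -
    have "0 \<le> inner (z + s *\<^sub>R y) (P (z + s *\<^sub>R y))" by (rule assms(2))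
    also have "\<dots> = inner z (P z) + s * inner z (P y) + s * inner y (P z) + s^2 * inner y (P y)"
      using linear_add[OF lin] linear_scale[OF lin]
      by (simp add: inner_add_left inner_add_right power2_eq_square algebra_simps)
    finally show ?thesis using assms(3) sym unfolding a_def b_def by (simp add: algebra_simps)
  qed
  have "a = 0"
  proof (rule ccontr)
    assume an: "a \<noteq> 0"
    define t where "t = 1 / (b + 1)"
    have t0: "t > 0" using b0 unfolding t_def by simp
    have bt: "b * t < 1" using b0 unfolding t_def by (simp add: field_simps)
    have "2 * (-t*a) * a + (-t*a)^2 * b = a^2 * (t * (b*t - 2))"
      by (simp add: power2_eq_square algebra_simps)
    also have "\<dots> < 0" using an t0 bt
      by (intro mult_pos_neg) auto
    finally show False using key[of "-t*a"] by simp
  qed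
  then have "inner y y = 0" unfolding a_def y_def by simp
  then show ?thesis unfolding y_def by simp
qed

lemma quad_scale:
  assumes "linear L" shows "inner (c *\<^sub>R x) (L (c *\<^sub>R x)) = c^2 * inner x (L x)"
  using linear_scale[OF assms] by (simp add: power2_eq_square)

lemma quad_cont:
  assumes "linear (L :: 'v::euclidean_space \<Rightarrow> 'v)" shows "continuous_on S (\<lambda>x. inner x (L x))"
proof -
  have "continuous_on S L" using assms linear_continuous_on linear_conv_bounded_linear by blast
  then show ?thesis by (intro continuous_intros)
qed

lemma rayleigh:
  fixes LR LB :: "'v::euclidean_space \<Rightarrow> 'v"
  assumes R: "sadj LR" and B: "sadj LB" and pd: "\<And>x. x \<noteq> 0 \<Longrightarrow> inner x (LR x) > 0"
  shows "\<exists>x0 t. x0 \<noteq> 0 \<and> LB x0 = t *\<^sub>R LR x0 \<and> (\<forall>x. inner x (LB x) \<le> t * inner x (LR x))"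
proof -
  have linR: "linear LR" and linB: "linear LB" using R B sadj_def by auto
  define q where "q x = inner x (LR x)" for x
  define f where "f x = inner x (LB x)" for x
  have qc: "continuous_on S q" for S unfolding q_def using quad_cont[OF linR] .
  have fc: "continuous_on S f" for S unfolding f_def using quad_cont[OF linB] .
  have qs: "q (c *\<^sub>R x) = c^2 * q x" for c x unfolding q_def by (rule quad_scale[OF linR])
  have fs: "f (c *\<^sub>R x) = c^2 * f x" for c x unfolding f_def by (rule quad_scale[OF linB])
  obtain u :: 'v where u: "norm u = 1" using vector_choose_size[of 1] by auto
  have "sphere (0::'v) 1 \<noteq> {}" using u by auto
  then obtain xm where xm: "xm \<in> sphere (0::'v) 1" "\<And>y. y \<in> sphere 0 1 \<Longrightarrow> q xm \<le> q y"
    using continuous_attains_inf[OF compact_sphere _ qc] by blast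
  define m where "m = q xm"
  have m0: "m > 0" unfolding m_def q_def using xm(1) pd by (metis norm_zero mem_sphere_0 zero_neq_one)
  have qlow: "q x \<ge> m * (norm x)^2" for x
  proof (cases "x = 0")
    case True then show ?thesis by (simp add: q_def linear_0[OF linR])
  next
    case False
    define y where "y = (1 / norm x) *\<^sub>R x"
    have "y \<in> sphere 0 1" using False unfolding y_def by simp
    then have "m \<le> q y" using xm(2) m_def by blast
    also have "q y = q x / (norm x)^2" unfolding y_def
      by (simp add: qs power_divide)
    finally show ?thesis using False by (simp add: field_simps)
  qed
  have qpos: "q x > 0" if "x \<noteq> 0" for x using pd that q_def by simp
  define K where "K = {x. q x = 1}"
  have "closed K" unfolding K_def using qc[of UNIV] by (simp add: closed_Collect_eq continuous_on_const)
  moreover have "bounded K"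
  proof -
    have "norm x \<le> sqrt (1/m)" if "x \<in> K" for x
    proof -
      have "m * (norm x)^2 \<le> 1" using qlow[of x] that K_def by simp
      then have "(norm x)^2 \<le> 1/m" using m0 by (simp add: field_simps)
      then show ?thesis using real_le_rsqrt by blast
    qed
    then show ?thesis unfolding bounded_iff by blast
  qed
  ultimately have Kc: "compact K" using compact_eq_bounded_closed by blast
  have uq: "q u > 0" using qpos u by (metis norm_zero zero_neq_one)
  have "(1 / sqrt (q u)) *\<^sub>R u \<in> K" unfolding K_def
    using uq by (simp add: qs power_divide)
  then have Kne: "K \<noteq> {}" by blast
  obtain x0 where x0: "x0 \<in> K" "\<And>y. y \<in> K \<Longrightarrow> f y \<le> f x0"
    using continuous_attains_sup[OF Kc Kne fc] by blast
  define t where "t = f x0"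
  have x0ne: "x0 \<noteq> 0" using x0(1) unfolding K_def q_def by (auto simp: linear_0[OF linR])
  have bound: "f x \<le> t * q x" for x
  proof (cases "x = 0")
    case True then show ?thesis by (simp add: q_def f_def linear_0[OF linR] linear_0[OF linB])
  next
    case False
    define y where "y = (1 / sqrt (q x)) *\<^sub>R x"
    have qx: "q x > 0" using qpos False by blast
    have "y \<in> K" unfolding K_def y_def
      using qx by (simp add: qs power_divide)
    then have "f y \<le> t" using x0(2) t_def by blast
    moreover have "f y = f x / q x" unfolding y_def
      using qx by (simp add: fs power_divide)
    ultimately show ?thesis using qx by (simp add: field_simps)
  qed
  define P where "P x = t *\<^sub>R LR x - LB x" for x
  have linP: "linear P" unfolding P_def linear_iff
    using linear_add[OF linR] linear_add[OF linB] linear_scale[OF linR] linear_scale[OF linB]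
    by (simp add: algebra_simps)
  have "sadj P" unfolding sadj_def using linP R B
    by (simp add: P_def sadj_def inner_diff_left inner_diff_right)
  moreover have "inner x (P x) \<ge> 0" for x using bound[of x]
    by (simp add: P_def f_def q_def inner_diff_right)
  moreover have "inner x0 (P x0) = 0" using x0(1)
    by (simp add: P_def K_def q_def t_def f_def inner_diff_right)
  ultimately have "P x0 = 0" by (rule psd_cs)
  then have "LB x0 = t *\<^sub>R LR x0" unfolding P_def by simp
  then show ?thesis using x0ne bound unfolding f_def q_def by blast
qed

lemma key_bound:
  fixes LR :: "'v::euclidean_space \<Rightarrow> 'v" and \<mu> :: real
  assumes R: "sadj LR" and pd: "\<And>x. x \<noteq> 0 \<Longrightarrow> inner x (LR x) > 0"
    and mu: "\<mu> > 0" and lam: "\<And>s. s \<in> eigs LR \<Longrightarrow> \<mu> * s \<le> 1"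
  shows "0 \<le> Max (eigs (\<lambda>x. x - \<mu> *\<^sub>R LR x)) \<and>
    (\<forall>x. inner (x - \<mu> *\<^sub>R LR x) (LR (x - \<mu> *\<^sub>R LR x))
       \<le> (Max (eigs (\<lambda>x. x - \<mu> *\<^sub>R LR x)))^2 * inner x (LR x))"
proof -
  define LA where "LA x = x - \<mu> *\<^sub>R LR x" for x
  have linR: "linear LR" using R sadj_def by blast
  have adjR: "inner x (LR y) = inner (LR x) y" for x y using R sadj_def by blast
  have linA: "linear LA" unfolding LA_def linear_iff
    using linear_add[OF linR] linear_scale[OF linR] by (simp add: algebra_simps)
  have adjA: "inner x (LA y) = inner (LA x) y" for x y
    unfolding LA_def by (simp add: inner_diff_left inner_diff_right adjR)
  have sA: "sadj LA" using linA adjA sadj_def by blast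
  define LB where "LB x = LA (LR (LA x))" for x
  have linB: "linear LB" unfolding LB_def linear_iff
    using linear_add[OF linR] linear_scale[OF linR] linear_add[OF linA] linear_scale[OF linA]
    by simp
  have sB: "sadj LB" unfolding sadj_def using linB
    by (simp add: LB_def adjA adjR)
  have comm: "LA (LR y) = LR (LA y)" for y
    unfolding LA_def using linear_diff[OF linR] linear_scale[OF linR] by simp
  have qnn: "inner x (LR x) \<ge> 0" for x
    using pd[of x] by (cases "x = 0") (auto simp: linear_0[OF linR])
  have inj: "z = 0" if "LR z = 0" for z using pd[of z] that by auto
  obtain x0 t where x0: "x0 \<noteq> 0" "LB x0 = t *\<^sub>R LR x0"
    and bnd: "\<And>x. inner x (LB x) \<le> t * inner x (LR x)"
    using rayleigh[OF R sB pd] by blast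
  have "LR (LA (LA x0) - t *\<^sub>R x0) = 0"
    using x0(2) comm[of "LA x0"] unfolding LB_def
    by (simp add: linear_diff[OF linR] linear_scale[OF linR])
  then have AA: "LA (LA x0) = t *\<^sub>R x0" using inj by (metis eq_iff_diff_eq_0)
  have "inner x0 (LB x0) = t * inner x0 (LR x0)" using x0(2) by simp
  moreover have "inner x0 (LB x0) = inner (LA x0) (LR (LA x0))" unfolding LB_def by (simp add: adjA)
  moreover have "inner x0 (LR x0) > 0" using pd x0(1) by blast
  ultimately have t0: "t \<ge> 0" using qnn[of "LA x0"]
    by (simp add: zero_le_mult_iff)
  have eignn: "s \<ge> 0" if sin: "s \<in> eigs LA" for s
  proof -
    obtain v where v: "v \<noteq> 0" "LA v = s *\<^sub>R v" using sin unfolding eigs_def by auto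
    have "\<mu> *\<^sub>R LR v = (1 - s) *\<^sub>R v" using v(2) unfolding LA_def by (simp add: algebra_simps)
    then have "LR v = ((1 - s) / \<mu>) *\<^sub>R v"
    proof -
      assume h: "\<mu> *\<^sub>R LR v = (1 - s) *\<^sub>R v"
      have "LR v = (1/\<mu>) *\<^sub>R (\<mu> *\<^sub>R LR v)" using mu by simp
      also have "\<dots> = ((1 - s) / \<mu>) *\<^sub>R v" using h by simp
      finally show ?thesis .
    qed
    then have "(1 - s) / \<mu> \<in> eigs LR" using v(1) unfolding eigs_def by auto
    then have "\<mu> * ((1 - s) / \<mu>) \<le> 1" by (rule lam)
    then show ?thesis using mu by simp
  qed
  have finA: "finite (eigs LA)" using eigs_finite[OF sA] .
  define sq where "sq = sqrt t"
  have sq0: "sq \<ge> 0" and sqt: "sq^2 = t" using t0 unfolding sq_def by auto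
  define w where "w = LA x0 + sq *\<^sub>R x0"
  have Aw: "LA w = sq *\<^sub>R w" unfolding w_def
    using linear_add[OF linA] linear_scale[OF linA] AA sqt
    by (simp add: algebra_simps power2_eq_square)
  have M: "sq \<le> Max (eigs LA) \<and> 0 \<le> Max (eigs LA)"
  proof (cases "w = 0")
    case False
    then have "sq \<in> eigs LA" using Aw unfolding eigs_def by auto
    then have "sq \<le> Max (eigs LA)" using finA by (rule Max_ge[rotated])
    then show ?thesis using sq0 by linarith
  next
    case True
    then have "LA x0 = (- sq) *\<^sub>R x0" unfolding w_def by (simp add: eq_neg_iff_add_eq_0)
    then have "- sq \<in> eigs LA" using x0(1) unfolding eigs_def by force
    then have "- sq \<le> Max (eigs LA)" "- sq \<ge> 0" using finA eignn[of "- sq"] by (auto intro: Max_ge)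
    then show ?thesis using sq0 by linarith
  qed
  then have "t \<le> (Max (eigs LA))^2" using sqt sq0 power_mono by blast
  then have "inner x (LB x) \<le> (Max (eigs LA))^2 * inner x (LR x)" for x
    using bnd[of x] mult_right_mono[OF _ qnn[of x]] by (meson order_trans)
  then show ?thesis using M unfolding LB_def LA_def[symmetric] by (simp add: adjA)
qed

lemma cscale: "complex_of_real t *s (x::complex^'m) = t *\<^sub>R x"
proof -
  have "(t *\<^sub>R x) $ i = complex_of_real t * x $ i" for i
    unfolding vector_scaleR_component by (simp only: scaleR_conv_of_real)
  then show ?thesis unfolding vec_eq_iff by simp
qed

lemma inner_cdot: "inner (x::complex^'m) y = Re (\<Sum>i\<in>UNIV. cnj (x $ i) * y $ i)"
  by (simp add: inner_vec_def Re_sum inner_complex_def)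

lemma wnorm2_inner: "wnorm2 R x = inner x (R *v x)"
  by (simp add: wnorm2_def inner_cdot)

lemma herm_cdot:
  assumes "hermitian_mat R"
  shows "(\<Sum>i\<in>UNIV. cnj (x $ i) * (R *v y) $ i) = (\<Sum>i\<in>UNIV. cnj ((R *v x) $ i) * y $ i)"
proof -
  have h: "cnj (R $ i $ j) = R $ j $ i" for i j using assms hermitian_mat_def by (metis complex_cnj_cnj)
  have "(\<Sum>i\<in>UNIV. cnj (x $ i) * (R *v y) $ i) = (\<Sum>i\<in>UNIV. \<Sum>j\<in>UNIV. cnj (x $ i) * R $ i $ j * y $ j)"
    by (simp add: matrix_vector_mult_def sum_distrib_left mult.assoc)
  also have "\<dots> = (\<Sum>j\<in>UNIV. \<Sum>i\<in>UNIV. cnj (x $ i) * R $ i $ j * y $ j)" by (rule sum.swap)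
  also have "\<dots> = (\<Sum>j\<in>UNIV. cnj ((R *v x) $ j) * y $ j)"
    by (simp add: matrix_vector_mult_def sum_distrib_right sum_distrib_left h ac_simps)
  finally show ?thesis .
qed

lemma herm_adj: "hermitian_mat R \<Longrightarrow> inner x (R *v y) = inner (R *v x) y"
  by (simp add: inner_cdot herm_cdot)


lemma mat_bound:
  fixes R :: "complex^'m^'m"
  assumes pd: "pos_def_mat R" and mu: "\<mu> > 0" and lm: "\<mu> * lambda_max R \<le> 1"
  shows "0 \<le> lambda_max (mat 1 - \<mu> *\<^sub>R R) \<and>
    (\<forall>x. wnorm2 R ((mat 1 - \<mu> *\<^sub>R R) *v x) \<le> (lambda_max (mat 1 - \<mu> *\<^sub>R R))^2 * wnorm2 R x)"
proof -
  have herm: "hermitian_mat R" using pd pos_def_mat_def by blast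
  have sR: "sadj ((*v) R)" unfolding sadj_def using herm_adj[OF herm] matrix_vector_mul_linear by blast
  have pdR: "x \<noteq> 0 \<Longrightarrow> inner x (R *v x) > 0" for x using pd unfolding pos_def_mat_def wnorm2_inner by blast
  have lmax: "lambda_max M = Max (eigs ((*v) M))" for M :: "complex^'m^'m"
    unfolding lambda_max_def eigs_def cscale ..
  have lam: "\<mu> * s \<le> 1" if "s \<in> eigs ((*v) R)" for s
  proof -
    have "s \<le> lambda_max R" unfolding lmax using eigs_finite[OF sR] that by (rule Max_ge)
    then show ?thesis using lm mu by (meson mult_left_mono order_trans less_imp_le)
  qed
  have sc: "\<mu> *\<^sub>R (R *v x) = (\<mu> *\<^sub>R R) *v x" for x
    by (simp add: vec_eq_iff matrix_vector_mult_def scaleR_sum_right)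
  have A: "(\<lambda>x. x - \<mu> *\<^sub>R (R *v x)) = (*v) (mat 1 - \<mu> *\<^sub>R R)"
    by (rule ext) (simp only: matrix_vector_mult_diff_rdistrib matrix_vector_mul_lid sc)
  note kb = key_bound[OF sR pdR mu lam]
  show ?thesis using kb unfolding A lmax[symmetric] wnorm2_inner
    by (simp add: A[symmetric, THEN fun_cong])
qed

lemma wnorm2_nn: "pos_def_mat R \<Longrightarrow> wnorm2 R x \<ge> 0"
  by (cases "x = 0") (auto simp: pos_def_mat_def wnorm2_def less_imp_le)

theorem theorem1:
  fixes P :: "'s measure"
    and Ru :: "'n::finite \<Rightarrow> complex^'m^'m"
    and c \<delta> r :: "'n \<Rightarrow> real"
    and \<mu> \<eta> \<epsilon> :: real
    and i0 :: nat
    and nbr :: "'n \<Rightarrow> 'n set"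
    and w :: "'n \<Rightarrow> nat \<Rightarrow> 's \<Rightarrow> complex^'m"
    and \<theta> :: "'n \<Rightarrow> 'n \<Rightarrow> nat \<Rightarrow> 's \<Rightarrow> real"
  assumes "prob_space P"
    and pd: "\<And>k. pos_def_mat (Ru k)"
    and c_pos: "\<And>k. c k > 0"
    and delta: "\<And>k. 0 < \<delta> k \<and> \<delta> k < 1"
    and rr: "\<And>k. 0 < r k \<and> r k < 1"
    and mu: "\<mu> > 0" "\<And>k. \<mu> * lambda_max (Ru k) \<le> 1"
    and eps: "0 < \<epsilon>" "\<epsilon> < 1"
    and w_meas: "\<And>k i. w k i \<in> borel_measurable P"
    and th_meas: "\<And>k l i. l \<in> nbr k \<Longrightarrow> \<theta> l k i \<in> borel_measurable P"
    and th_range: "\<And>k l i s. l \<in> nbr k \<Longrightarrow> s \<in> space P \<Longrightarrow> \<epsilon> \<le> \<theta> l k i s \<and> \<theta> l k i s \<le> 1"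
    and eta: "\<eta> > 0"
    and msd: "\<And>k i. i \<ge> i0 \<Longrightarrow>
               (\<integral>\<^sup>+ s. ennreal (wnorm2 (Ru k) (w k i s)) \<partial>P) \<le> ennreal (\<eta> * \<mu>)"
  shows "\<forall>k l i. l \<in> nbr k \<and> i \<ge> i0 + 1 \<longrightarrow>
    (let \<rho>max = Max (range (\<lambda>j. lambda_max (mat 1 - \<mu> *\<^sub>R Ru j)));
         \<chi>min = Min (range (\<lambda>j. chi (\<delta> j) (r j)));
         co = \<eta> * \<mu> * \<rho>max\<^sup>2 / \<chi>min;
         bbar = (\<lambda>s. wnorm2 (Ru k) ((mat 1 - \<mu> *\<^sub>R Ru k) *v w k (i - 1) s));
         A = {s \<in> space P. bbar s * \<theta> l k i s > c k * chi (\<delta> k) (r k)}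
     in measure P A \<le> min (co / c k) 1)"
  proof (intro allI impI)
  fix k l i assume kli: "l \<in> nbr k \<and> i \<ge> i0 + 1"
  interpret P: prob_space P by fact
  define \<rho>max where "\<rho>max = Max (range (\<lambda>j. lambda_max (mat 1 - \<mu> *\<^sub>R Ru j)))"
  define \<chi>min where "\<chi>min = Min (range (\<lambda>j. chi (\<delta> j) (r j)))"
  define M where "M = mat 1 - \<mu> *\<^sub>R Ru k"
  define bbar where "bbar = (\<lambda>s. wnorm2 (Ru k) (M *v w k (i - 1) s))"
  define g where "g = (\<lambda>s. wnorm2 (Ru k) (w k (i - 1) s))"
  define A where "A = {s \<in> space P. bbar s * \<theta> l k i s > c k * chi (\<delta> k) (r k)}"
  define a where "a = c k * chi (\<delta> k) (r k)"
  have chipos: "chi (\<delta> j) (r j) > 0" for j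
  proof -
    have d: "0 < \<delta> j" "\<delta> j < 1" and rj: "0 < r j" "r j < 1" using delta[of j] rr[of j] by auto
    have "\<delta> j * r j < \<delta> j" using d rj mult_strict_left_mono[of "r j" 1 "\<delta> j"] by simp
    then have "1 - \<delta> j * r j > 0" using d by linarith
    moreover have "\<delta> j * (1 - r j) > 0" using d rj by simp
    ultimately show ?thesis unfolding chi_def by simp
  qed
  have a0: "a > 0" unfolding a_def using c_pos chipos by simp
  have chimin0: "\<chi>min > 0" unfolding \<chi>min_def using chipos by (simp add: Min_gr_iff)
  have chimin_le: "\<chi>min \<le> chi (\<delta> k) (r k)" unfolding \<chi>min_def by (rule Min_le) auto
  obtain \<rho>0: "0 \<le> lambda_max M" and \<rho>b: "\<And>x. wnorm2 (Ru k) (M *v x) \<le> (lambda_max M)^2 * wnorm2 (Ru k) x"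
    using mat_bound[OF pd mu] unfolding M_def by blast
  have "lambda_max M \<le> \<rho>max" unfolding \<rho>max_def M_def by (rule Max_ge) auto
  then have rho2: "(lambda_max M)^2 \<le> \<rho>max^2" using \<rho>0 power_mono by blast
  have bb: "bbar s \<le> \<rho>max^2 * g s" for s
    unfolding bbar_def g_def
    using \<rho>b[of "w k (i-1) s"] mult_right_mono[OF rho2 wnorm2_nn[OF pd]] by (meson order_trans)
  have bnn: "bbar s \<ge> 0" for s unfolding bbar_def using wnorm2_nn[OF pd] .
  have gnn: "g s \<ge> 0" for s unfolding g_def using wnorm2_nn[OF pd] .
  have c1: "continuous_on UNIV ((*v) N)" for N :: "complex^'m^'m" by (rule matrix_vector_mult_linear_continuous_on)
  have cont: "continuous_on UNIV (\<lambda>x. wnorm2 (Ru k) (N *v x))" for N :: "complex^'m^'m"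
    unfolding wnorm2_inner
    by (intro continuous_on_inner c1 linear_continuous_on_compose[OF c1] matrix_vector_mul_linear)
  have meas: "(\<lambda>s. wnorm2 (Ru k) (N *v w k (i - 1) s)) \<in> borel_measurable P" for N :: "complex^'m^'m"
    using measurable_compose[OF w_meas borel_measurable_continuous_onI[OF cont]] by (simp add: o_def)
  have bm: "bbar \<in> borel_measurable P" unfolding bbar_def by (rule meas)
  have gm: "g \<in> borel_measurable P" unfolding g_def using meas[of "mat 1"] by simp
  define B where "B = {s \<in> space P. a \<le> bbar s}"
  have Bs: "B \<in> sets P" unfolding B_def using bm by measurable
  have AB: "A \<subseteq> B"
  proof
    fix s assume s: "s \<in> A"
    then have sp: "s \<in> space P" and gt: "bbar s * \<theta> l k i s > a" unfolding A_def a_def by auto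
    have "bbar s * \<theta> l k i s \<le> bbar s * 1"
      using th_range[of l k s i] kli sp bnn[of s] by (intro mult_left_mono) auto
    then show "s \<in> B" using gt sp unfolding B_def by simp
  qed
  have "ennreal a * emeasure P B = (\<integral>\<^sup>+ s. ennreal a * indicator B s \<partial>P)"
    using nn_integral_cmult_indicator[OF Bs] by (simp add: mult.commute)
  also have "\<dots> \<le> (\<integral>\<^sup>+ s. ennreal (bbar s) \<partial>P)"
    by (intro nn_integral_mono) (auto simp: B_def indicator_def intro: ennreal_leI)
  also have "\<dots> \<le> (\<integral>\<^sup>+ s. ennreal (\<rho>max^2) * ennreal (g s) \<partial>P)"
    using bb gnn by (intro nn_integral_mono) (simp add: ennreal_mult[symmetric])
  also have "\<dots> = ennreal (\<rho>max^2) * (\<integral>\<^sup>+ s. ennreal (g s) \<partial>P)"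
    using gm by (intro nn_integral_cmult) simp
  also have "\<dots> \<le> ennreal (\<rho>max^2) * ennreal (\<eta> * \<mu>)"
    using msd[of "i - 1" k] kli unfolding g_def by (intro mult_left_mono) auto
  also have "\<dots> = ennreal (\<rho>max^2 * (\<eta> * \<mu>))"
    using eta mu by (simp add: ennreal_mult)
  finally have "ennreal (a * measure P B) \<le> ennreal (\<rho>max^2 * (\<eta> * \<mu>))"
    using a0 by (simp add: P.emeasure_eq_measure ennreal_mult)
  then have "a * measure P B \<le> \<rho>max^2 * (\<eta> * \<mu>)"
    using eta mu by (simp add: ennreal_le_iff)
  then have mB: "measure P B \<le> \<rho>max^2 * (\<eta> * \<mu>) / a" using a0 by (simp add: field_simps)
  have "\<rho>max^2 * (\<eta> * \<mu>) / a \<le> \<eta> * \<mu> * \<rho>max\<^sup>2 / \<chi>min / c k"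
  proof -
    have X: "0 \<le> \<rho>max^2 * (\<eta> * \<mu>) / c k" using eta mu c_pos[of k] by simp
    have "\<rho>max^2 * (\<eta> * \<mu>) / a = (\<rho>max^2 * (\<eta> * \<mu>) / c k) / chi (\<delta> k) (r k)"
      unfolding a_def by (simp add: field_simps)
    also have "\<dots> \<le> (\<rho>max^2 * (\<eta> * \<mu>) / c k) / \<chi>min"
      using X chimin0 chimin_le by (intro divide_left_mono) auto
    also have "\<dots> = \<eta> * \<mu> * \<rho>max\<^sup>2 / \<chi>min / c k" by (simp add: field_simps)
    finally show ?thesis .
  qed
  moreover have "measure P A \<le> measure P B" using AB Bs by (rule P.finite_measure_mono)
  ultimately have m1: "measure P A \<le> \<eta> * \<mu> * \<rho>max\<^sup>2 / \<chi>min / c k" using mB by linarith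
  have m2: "measure P A \<le> 1" by (rule P.prob_le_1)
  show "let \<rho>max = Max (range (\<lambda>j. lambda_max (mat 1 - \<mu> *\<^sub>R Ru j)));
         \<chi>min = Min (range (\<lambda>j. chi (\<delta> j) (r j)));
         co = \<eta> * \<mu> * \<rho>max\<^sup>2 / \<chi>min;
         bbar = (\<lambda>s. wnorm2 (Ru k) ((mat 1 - \<mu> *\<^sub>R Ru k) *v w k (i - 1) s));
         A = {s \<in> space P. bbar s * \<theta> l k i s > c k * chi (\<delta> k) (r k)}
     in measure P A \<le> min (co / c k) 1"
    using m1 m2 unfolding Let_def \<rho>max_def[symmetric] \<chi>min_def[symmetric] A_def bbar_def M_def
    by simp
qed

end
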